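(* Let $\Lambda=B(\mathbb Z^2)\subset\mathbb R^2$ be a Bravais lattice and let $f\colon\mathbb R\to\mathbb R$ be a non-negative, compactly supported function with $f(0)=0$ and $\sum_{u\in\Lambda\setminus\{0\}} f(\|u\|^2)<\infty$. Then, in the strong operator topology on bounded operators on $\ell^2(\Lambda)$, $W_f^N\to W_f$ and $L_f^N\to L_f$ as $N\to\infty$ through even integers.
   Context: The operator $W_f$ on $\ell^2(\Lambda)$ is $(W_f\psi)(v)=\sum_{u\in\Lambda,\,u\ne v} f(\|u-v\|^2)\psi(u)$, and $L_f=\big(\sum_{u\in\Lambda\setminus\{0\}}f(\|u\|^2)\big)\mathrm{Id}-W_f$. For an even integer $N$, let $\Lambda^N=\{B(i-N/2,\ j-N/2)^t: i,j\in\{0,1,\dots,N-1\}\}\subset\Lambda$ (an $N^2$-point truncation of $\Lambda$), and let $d$ denote the distance on $\Lambda^N$ after periodic identification of the boundaries, i.e. the distance in the torus $\mathbb R^2/B(N\mathbb Z^2)$. Define $W_f^N$ on $\ell^2(\Lambda^N)$ by $(W_f^N\psi)(v)=\sum_{u\in\Lambda^N,\,u\ne v} f(d^2(u,v))\psi(u)$, and $L_f^N$ by $(L_f^N\psi)(v)=\big[\sum_{u\in\Lambda^N\setminus\{0\}} f(d^2(u,0))\big]\psi(v)-(W_f^N\psi)(v)$ for $v\in\Lambda^N$. Both are extended to operators on $\ell^2(\Lambda)$ by applying them to the restriction of $\psi$ to $\Lambda^N$ and setting the output to $0$ at points $v\notin\Lambda^N$. *)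

theory Defs
  imports "HOL-Analysis.Analysis"
begin

text \<open>Lattice points are indexed by their integer coordinates k in Z^2; the point is B k.
  Since B is invertible, l2(Lambda) is identified with functions on int * int.\<close>

definition lat :: "real^2^2 \<Rightarrow> int \<times> int \<Rightarrow> real^2" where
  "lat B k = B *v vector [real_of_int (fst k), real_of_int (snd k)]"

text \<open>Truncation Lambda^N: coordinates i - N/2, j - N/2 with i, j in {0..N-1} (N even).\<close>
definition trunc :: "nat \<Rightarrow> (int \<times> int) set" where
  "trunc N = {- (int N div 2) ..< int N - int N div 2} \<times> {- (int N div 2) ..< int N - int N div 2}"

definition tdist :: "real^2^2 \<Rightarrow> nat \<Rightarrow> real^2 \<Rightarrow> real^2 \<Rightarrow> real" where
  "tdist B N x y = Inf {norm (x - y - lat B (int N * a, int N * b)) | a b. True}"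

definition in_l2 :: "(int \<times> int \<Rightarrow> complex) \<Rightarrow> bool" where
  "in_l2 \<psi> \<longleftrightarrow> (\<lambda>v. (norm (\<psi> v))\<^sup>2) summable_on UNIV"

definition Wf :: "(real \<Rightarrow> real) \<Rightarrow> real^2^2 \<Rightarrow> (int \<times> int \<Rightarrow> complex) \<Rightarrow> int \<times> int \<Rightarrow> complex" where
  "Wf f B \<psi> v = (\<Sum>\<^sub>\<infinity>u\<in>UNIV - {v}. of_real (f ((norm (lat B u - lat B v))\<^sup>2)) * \<psi> u)"

definition Lf :: "(real \<Rightarrow> real) \<Rightarrow> real^2^2 \<Rightarrow> (int \<times> int \<Rightarrow> complex) \<Rightarrow> int \<times> int \<Rightarrow> complex" where
  "Lf f B \<psi> v = of_real (\<Sum>\<^sub>\<infinity>u\<in>UNIV - {(0,0)}. f ((norm (lat B u))\<^sup>2)) * \<psi> v - Wf f B \<psi> v"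

definition WfN :: "(real \<Rightarrow> real) \<Rightarrow> real^2^2 \<Rightarrow> nat \<Rightarrow> (int \<times> int \<Rightarrow> complex) \<Rightarrow> int \<times> int \<Rightarrow> complex" where
  "WfN f B N \<psi> v = (if v \<in> trunc N then
     (\<Sum>u\<in>trunc N - {v}. of_real (f ((tdist B N (lat B u) (lat B v))\<^sup>2)) * \<psi> u) else 0)"

definition LfN :: "(real \<Rightarrow> real) \<Rightarrow> real^2^2 \<Rightarrow> nat \<Rightarrow> (int \<times> int \<Rightarrow> complex) \<Rightarrow> int \<times> int \<Rightarrow> complex" where
  "LfN f B N \<psi> v = (if v \<in> trunc N then
     of_real (\<Sum>u\<in>trunc N - {(0,0)}. f ((tdist B N (lat B u) (lat B (0,0)))\<^sup>2)) * \<psi> v - WfN f B N \<psi> v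
     else 0)"

definition strong_conv_even ::
  "(nat \<Rightarrow> (int \<times> int \<Rightarrow> complex) \<Rightarrow> int \<times> int \<Rightarrow> complex) \<Rightarrow>
   ((int \<times> int \<Rightarrow> complex) \<Rightarrow> int \<times> int \<Rightarrow> complex) \<Rightarrow> bool" where
  "strong_conv_even T S \<longleftrightarrow> (\<forall>\<psi>. in_l2 \<psi> \<longrightarrow>
     (\<forall>\<^sub>F n in sequentially. in_l2 (\<lambda>v. T (2*n) \<psi> v - S \<psi> v)) \<and>
     (\<lambda>n. \<Sum>\<^sub>\<infinity>v. (norm (T (2*n) \<psi> v - S \<psi> v))\<^sup>2) \<longlonglongrightarrow> 0)"

end

theory Submission
  imports Defs
begin

lemma summable_on_sum_fin:
  fixes h :: "'b \<Rightarrow> 'a \<Rightarrow> real"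
  assumes "finite S" "\<And>s. s \<in> S \<Longrightarrow> h s summable_on A"
  shows "(\<lambda>v. \<Sum>s\<in>S. h s v) summable_on A \<and> (\<Sum>\<^sub>\<infinity>v\<in>A. \<Sum>s\<in>S. h s v) = (\<Sum>s\<in>S. \<Sum>\<^sub>\<infinity>v\<in>A. h s v)"
  using assms
proof (induction S rule: finite_induct)
  case empty
  then show ?case by simp
next
  case (insert x F)
  then have a: "h x summable_on A" and b: "(\<lambda>v. \<Sum>s\<in>F. h s v) summable_on A"
    and c: "(\<Sum>\<^sub>\<infinity>v\<in>A. \<Sum>s\<in>F. h s v) = (\<Sum>s\<in>F. \<Sum>\<^sub>\<infinity>v\<in>A. h s v)" by auto
  show ?case using insert.hyps summable_on_add[OF a b] infsum_add[OF a b] c by simp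
qed

lemma shift_summable:
  fixes h :: "int \<times> int \<Rightarrow> real"
  assumes "h summable_on UNIV"
  shows "(\<lambda>v. h (v + s)) summable_on UNIV \<and> (\<Sum>\<^sub>\<infinity>v. h (v + s)) = (\<Sum>\<^sub>\<infinity>v. h v)"
proof -
  have bij: "bij_betw (\<lambda>v. v + s) UNIV UNIV"
    by (rule bij_betwI[where g="\<lambda>v. v - s"]) auto
  show ?thesis using summable_on_reindex_bij_betw[OF bij, of h] infsum_reindex_bij_betw[OF bij, of h] assms
    by simp
qed

lemma l2_bound:
  fixes \<phi> X :: "int \<times> int \<Rightarrow> complex" and S :: "(int \<times> int) set" and G :: real
  assumes l2: "in_l2 \<phi>" and fin: "finite S" and G: "G \<ge> 0"
    and bd: "\<And>v. norm (X v) \<le> G * (\<Sum>s\<in>S. norm (\<phi> (v + s)))"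
  shows "in_l2 X \<and> (\<Sum>\<^sub>\<infinity>v. (norm (X v))\<^sup>2) \<le> G\<^sup>2 * real (card S) * real (card S) * (\<Sum>\<^sub>\<infinity>v. (norm (\<phi> v))\<^sup>2)"
proof -
  let ?h = "\<lambda>v. (norm (\<phi> v))\<^sup>2"
  have hs: "?h summable_on UNIV" using l2 by (simp add: in_l2_def)
  have sh: "\<And>s. (\<lambda>v. ?h (v + s)) summable_on UNIV \<and> (\<Sum>\<^sub>\<infinity>v. ?h (v + s)) = (\<Sum>\<^sub>\<infinity>v. ?h v)"
    using shift_summable[OF hs] by blast
  have H: "(\<lambda>v. \<Sum>s\<in>S. ?h (v + s)) summable_on UNIV \<and> (\<Sum>\<^sub>\<infinity>v. \<Sum>s\<in>S. ?h (v + s)) = (\<Sum>s\<in>S. \<Sum>\<^sub>\<infinity>v. ?h (v+s))"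
    by (rule summable_on_sum_fin[OF fin]) (use sh in auto)
  have Hv: "(\<Sum>\<^sub>\<infinity>v. \<Sum>s\<in>S. ?h (v + s)) = real (card S) * (\<Sum>\<^sub>\<infinity>v. ?h v)"
    using H sh by simp
  let ?g = "\<lambda>v. G\<^sup>2 * real (card S) * (\<Sum>s\<in>S. ?h (v + s))"
  have gs: "?g summable_on UNIV" using H summable_on_cmult_right by blast
  have pt: "(norm (X v))\<^sup>2 \<le> ?g v" for v
  proof -
    have "(norm (X v))\<^sup>2 \<le> (G * (\<Sum>s\<in>S. norm (\<phi> (v + s))))\<^sup>2"
      using bd[of v] by (simp add: power_mono)
    also have "\<dots> = G\<^sup>2 * (\<Sum>s\<in>S. norm (\<phi> (v + s)))\<^sup>2" by (simp add: power_mult_distrib)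
    also have "\<dots> \<le> G\<^sup>2 * ((\<Sum>s\<in>S. ?h (v + s)) * real (card S))"
      by (rule mult_left_mono[OF sum_squared_le_sum_of_squares]) simp
    finally show ?thesis by (simp add: mult_ac)
  qed
  have Xs: "(\<lambda>v. (norm (X v))\<^sup>2) summable_on UNIV"
    by (rule summable_on_comparison_test[OF gs]) (use pt in auto)
  have "(\<Sum>\<^sub>\<infinity>v. (norm (X v))\<^sup>2) \<le> (\<Sum>\<^sub>\<infinity>v. ?g v)"
    by (rule infsum_mono[OF Xs gs pt])
  also have "\<dots> = G\<^sup>2 * real (card S) * (\<Sum>\<^sub>\<infinity>v. \<Sum>s\<in>S. ?h (v + s))"
    by (rule infsum_cmult_right) (use H in auto)
  also have "\<dots> = G\<^sup>2 * real (card S) * real (card S) * (\<Sum>\<^sub>\<infinity>v. ?h v)" using Hv by simp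
  finally show ?thesis using Xs by (simp add: in_l2_def)
qed


lemma tail_l2:
  fixes \<psi> :: "int \<times> int \<Rightarrow> complex" and C :: "nat \<Rightarrow> (int \<times> int) set"
  assumes l2: "in_l2 \<psi>" and fin: "\<And>n. finite (C n)"
    and lim: "filterlim C (finite_subsets_at_top UNIV) sequentially"
  shows "(\<lambda>n. \<Sum>\<^sub>\<infinity>v. (norm (if v \<in> C n then 0 else \<psi> v))\<^sup>2) \<longlonglongrightarrow> 0"
proof -
  let ?h = "\<lambda>v. (norm (\<psi> v))\<^sup>2"
  have hs: "?h summable_on UNIV" using l2 by (simp add: in_l2_def)
  have eq: "(\<Sum>\<^sub>\<infinity>v. (norm (if v \<in> C n then 0 else \<psi> v))\<^sup>2) = (\<Sum>\<^sub>\<infinity>v. ?h v) - sum ?h (C n)" for n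
  proof -
    have "(\<Sum>\<^sub>\<infinity>v. (norm (if v \<in> C n then 0 else \<psi> v))\<^sup>2) = (\<Sum>\<^sub>\<infinity>v\<in>UNIV - C n. ?h v)"
      by (rule infsum_cong_neutral) auto
    also have "\<dots> = (\<Sum>\<^sub>\<infinity>v. ?h v) - (\<Sum>\<^sub>\<infinity>v\<in>C n. ?h v)"
      by (rule infsum_Diff[OF hs]) (use fin in auto)
    finally show ?thesis using fin by simp
  qed
  have t: "(sum ?h \<longlongrightarrow> (\<Sum>\<^sub>\<infinity>v. ?h v)) (finite_subsets_at_top UNIV)"
    using infsum_tendsto[OF hs] .
  have "(\<lambda>n. sum ?h (C n)) \<longlonglongrightarrow> (\<Sum>\<^sub>\<infinity>v. ?h v)"
    using filterlim_compose[OF t lim] by (simp add: o_def)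
  then have "(\<lambda>n. (\<Sum>\<^sub>\<infinity>v. ?h v) - sum ?h (C n)) \<longlonglongrightarrow> (\<Sum>\<^sub>\<infinity>v. ?h v) - (\<Sum>\<^sub>\<infinity>v. ?h v)"
    by (intro tendsto_intros)
  then show ?thesis by (simp add: eq)
qed

lemma box_lim:
  fixes k :: int
  shows "filterlim (\<lambda>n. {- int n + k ..< int n - k} \<times> {- int n + k ..< int n - k}) (finite_subsets_at_top UNIV) sequentially"
  unfolding filterlim_finite_subsets_at_top
proof (intro allI impI)
  fix X :: "(int \<times> int) set" assume "finite X \<and> X \<subseteq> UNIV"
  then have fX: "finite X" by simp
  obtain m where m: "\<And>x. x \<in> X \<Longrightarrow> \<bar>fst x\<bar> \<le> m \<and> \<bar>snd x\<bar> \<le> m"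
  proof -
    let ?m = "Max ((\<lambda>x. max \<bar>fst x\<bar> \<bar>snd x\<bar>) ` X)"
    have "max \<bar>fst x\<bar> \<bar>snd x\<bar> \<le> ?m" if "x \<in> X" for x
      using fX that by (intro Max_ge) auto
    then show ?thesis by (intro that) fastforce
  qed
  show "\<forall>\<^sub>F n in sequentially. finite ({- int n + k..<int n - k} \<times> {- int n + k..<int n - k}) \<and>
          X \<subseteq> {- int n + k..<int n - k} \<times> {- int n + k..<int n - k} \<and>
          {- int n + k..<int n - k} \<times> {- int n + k..<int n - k} \<subseteq> UNIV"
    unfolding eventually_sequentially
  proof (intro exI[of _ "nat (m + \<bar>k\<bar> + 1)"] allI impI conjI)
    fix n assume n: "nat (m + \<bar>k\<bar> + 1) \<le> n"
    show "X \<subseteq> {- int n + k..<int n - k} \<times> {- int n + k..<int n - k}"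
    proof
      fix x assume "x \<in> X" then have "\<bar>fst x\<bar> \<le> m \<and> \<bar>snd x\<bar> \<le> m" by (rule m)
      then show "x \<in> {- int n + k..<int n - k} \<times> {- int n + k..<int n - k}"
        using n by (cases x) auto
    qed
  qed auto
qed


lemma lat_diff: "lat B u - lat B v = lat B (u - v)"
proof -
  have "vector [real_of_int (fst u), real_of_int (snd u)] - vector [real_of_int (fst v), real_of_int (snd v)]
      = (vector [real_of_int (fst (u - v)), real_of_int (snd (u - v))] :: real^2)"
    by (simp add: vec_eq_iff forall_2 vector_2)
  then show ?thesis unfolding lat_def by (metis matrix_vector_mult_diff_distrib)
qed

lemma lat_lower:
  assumes "invertible B"
  shows "\<exists>c>0. \<forall>k. c * \<bar>real_of_int (fst k)\<bar> \<le> norm (lat B k) \<and> c * \<bar>real_of_int (snd k)\<bar> \<le> norm (lat B k)"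
proof -
  obtain Bi where inv: "Bi ** B = mat 1" using assms unfolding invertible_def by blast
  obtain K where K: "K > 0" "\<And>y. norm (Bi *v y) \<le> norm y * K"
    using bounded_linear.pos_bounded[OF matrix_vector_mul_bounded_linear[of "Bi"]] by blast
  show ?thesis
  proof (intro exI[of _ "1/K"] conjI allI)
    fix k :: "int \<times> int"
    let ?x = "vector [real_of_int (fst k), real_of_int (snd k)] :: real^2"
    have "?x = Bi *v lat B k" unfolding lat_def
      by (simp add: matrix_vector_mul_assoc inv)
    then have nx: "norm ?x \<le> norm (lat B k) * K" using K(2) by metis
    have c1: "\<bar>real_of_int (fst k)\<bar> \<le> norm ?x" using component_le_norm_cart[of ?x 1] by simp
    have c2: "\<bar>real_of_int (snd k)\<bar> \<le> norm ?x" using component_le_norm_cart[of ?x 2] by simp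
    show "1 / K * \<bar>real_of_int (fst k)\<bar> \<le> norm (lat B k)"
      using c1 nx K(1) by (simp add: field_simps)
    show "1 / K * \<bar>real_of_int (snd k)\<bar> \<le> norm (lat B k)"
      using c2 nx K(1) by (simp add: field_simps)
  qed (use K in simp)
qed

lemma tdist_lat: "tdist B N (lat B u) (lat B v) = Inf {norm (lat B (u - v - (int N * a, int N * b))) | a b. True}"
  unfolding tdist_def by (simp add: lat_diff)

lemma trunc_even: "trunc (2*n) = {- int n..<int n} \<times> {- int n..<int n}"
  unfolding trunc_def by simp


lemma int_mult_ge: "(k::int) \<noteq> 0 \<Longrightarrow> int N \<le> \<bar>int N * k\<bar>"
proof -
  assume "k \<noteq> 0"
  then have "int N * 1 \<le> int N * \<bar>k\<bar>" by (intro mult_left_mono) auto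
  then show ?thesis by (simp add: abs_mult)
qed

locale geo =
  fixes B :: "real^2^2" and f :: "real \<Rightarrow> real" and c M :: real and Kb :: int
  assumes cpos: "c > 0"
    and clow: "\<And>k. c * \<bar>real_of_int (fst k)\<bar> \<le> norm (lat B k) \<and> c * \<bar>real_of_int (snd k)\<bar> \<le> norm (lat B k)"
    and Mnn: "M \<ge> 0" and fsupp: "\<And>x. f x \<noteq> 0 \<Longrightarrow> x \<le> M" and fnn: "\<And>x. f x \<ge> 0"
    and Kb: "(sqrt M + 1) / c \<le> real_of_int Kb"
begin

definition box :: "(int \<times> int) set" where "box = {-Kb..Kb} \<times> {-Kb..Kb}"
definition Mx :: real where "Mx = Max ((\<lambda>w. norm (lat B w)) ` box)"
definition G :: real where "G = Max ((\<lambda>w. f ((norm (lat B w))\<^sup>2)) ` box)"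
definition Tset :: "nat \<Rightarrow> int \<times> int \<Rightarrow> real set" where
  "Tset N d = {norm (lat B (d - (int N * a, int N * b))) | a b. True}"

lemma Kb_nn: "Kb \<ge> 0"
proof -
  have "sqrt M + 1 > 0" using Mnn by (simp add: add_nonneg_pos)
  then have "(sqrt M + 1) / c > 0" using cpos by simp
  then show ?thesis using Kb by linarith
qed

lemma box_fin: "finite box" unfolding box_def by simp
lemma zero_box: "(0,0) \<in> box" using Kb_nn unfolding box_def by simp

lemma G_nn: "G \<ge> 0"
proof -
  have "f ((norm (lat B (0,0)))\<^sup>2) \<le> G" unfolding G_def
    using box_fin zero_box by (intro Max_ge) auto
  then show ?thesis using fnn order_trans by blast
qed

lemma coord_box: "norm (lat B w) < sqrt M + 1 \<Longrightarrow> w \<in> box"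
proof -
  assume a: "norm (lat B w) < sqrt M + 1"
  have "c * \<bar>real_of_int (fst w)\<bar> < sqrt M + 1" "c * \<bar>real_of_int (snd w)\<bar> < sqrt M + 1"
    using clow[of w] a by linarith+
  then have "\<bar>real_of_int (fst w)\<bar> < (sqrt M + 1) / c" "\<bar>real_of_int (snd w)\<bar> < (sqrt M + 1) / c"
    using cpos by (simp_all add: field_simps)
  then have "\<bar>real_of_int (fst w)\<bar> < real_of_int Kb" "\<bar>real_of_int (snd w)\<bar> < real_of_int Kb"
    using Kb by linarith+
  then show ?thesis unfolding box_def by (cases w) auto
qed

lemma g_box: "f ((norm (lat B d))\<^sup>2) \<noteq> 0 \<Longrightarrow> d \<in> box"
proof -
  assume "f ((norm (lat B d))\<^sup>2) \<noteq> 0"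
  then have "(norm (lat B d))\<^sup>2 \<le> M" by (rule fsupp)
  then have "norm (lat B d) \<le> sqrt M" by (rule real_le_rsqrt)
  then show ?thesis by (intro coord_box) simp
qed

lemma g_le_G: "f ((norm (lat B d))\<^sup>2) \<le> G"
proof (cases "f ((norm (lat B d))\<^sup>2) = 0")
  case True then show ?thesis using G_nn by simp
next
  case False
  then have "d \<in> box" by (rule g_box)
  then show ?thesis unfolding G_def using box_fin by (intro Max_ge) auto
qed

lemma Tset_ne: "Tset N d \<noteq> {}" unfolding Tset_def by blast
lemma Tset_bdd: "bdd_below (Tset N d)" unfolding Tset_def bdd_below_def by (intro exI[of _ 0]) auto
lemma Tset_nn: "Inf (Tset N d) \<ge> 0"
  by (rule cInf_greatest[OF Tset_ne]) (auto simp: Tset_def)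

lemma lemA:
  assumes "f ((Inf (Tset N d))\<^sup>2) \<noteq> 0"
  shows "\<exists>a b. d - (int N * a, int N * b) \<in> box"
proof -
  have "(Inf (Tset N d))\<^sup>2 \<le> M" using assms by (rule fsupp)
  then have "Inf (Tset N d) \<le> sqrt M" by (rule real_le_rsqrt)
  then have "Inf (Tset N d) < sqrt M + 1" by simp
  then obtain x where "x \<in> Tset N d" "x < sqrt M + 1"
    using cInf_less_iff[OF Tset_ne Tset_bdd] by blast
  then obtain a b where "norm (lat B (d - (int N * a, int N * b))) < sqrt M + 1"
    unfolding Tset_def by blast
  then show ?thesis using coord_box by blast
qed

lemma lemB:
  assumes N: "real_of_int Kb + Mx / c \<le> real N"
    and w: "d - (int N * a0, int N * b0) \<in> box"
  shows "Inf (Tset N d) = norm (lat B (d - (int N * a0, int N * b0)))"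
proof (rule cInf_eq_minimum)
  show "norm (lat B (d - (int N * a0, int N * b0))) \<in> Tset N d" unfolding Tset_def by blast
  fix x assume "x \<in> Tset N d"
  then obtain a b where x: "x = norm (lat B (d - (int N * a, int N * b)))" unfolding Tset_def by blast
  let ?w = "d - (int N * a0, int N * b0)"
  have wb: "norm (lat B ?w) \<le> Mx" unfolding Mx_def using box_fin w by (intro Max_ge) auto
  have wc: "\<bar>fst ?w\<bar> \<le> Kb" "\<bar>snd ?w\<bar> \<le> Kb" using w unfolding box_def mem_Times_iff by auto
  have NK: "c * (real N - real_of_int Kb) \<ge> Mx"
    using N cpos by (simp add: field_simps)
  show "norm (lat B ?w) \<le> x"
  proof (cases "a = a0 \<and> b = b0")
    case True then show ?thesis using x by simp
  next
    case False
    let ?v = "d - (int N * a, int N * b)"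
    have "\<bar>fst ?v\<bar> \<ge> int N - Kb \<or> \<bar>snd ?v\<bar> \<ge> int N - Kb"
    proof (cases "a = a0")
      case True
      then have "b - b0 \<noteq> 0" using False by simp
      then have "int N \<le> \<bar>int N * (b - b0)\<bar>" by (rule int_mult_ge)
      moreover have "snd ?v = snd ?w - int N * (b - b0)" by (simp add: algebra_simps)
      ultimately show ?thesis using wc by linarith
    next
      case False
      then have "a - a0 \<noteq> 0" by simp
      then have "int N \<le> \<bar>int N * (a - a0)\<bar>" by (rule int_mult_ge)
      moreover have "fst ?v = fst ?w - int N * (a - a0)" by (simp add: algebra_simps)
      ultimately show ?thesis using wc by linarith
    qed
    then have "real N - real_of_int Kb \<le> \<bar>real_of_int (fst ?v)\<bar> \<or> real N - real_of_int Kb \<le> \<bar>real_of_int (snd ?v)\<bar>"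
      by linarith
    then have "c * (real N - real_of_int Kb) \<le> norm (lat B ?v)"
      using clow[of ?v] cpos by (meson mult_left_mono less_imp_le order_trans)
    then show ?thesis using x wb NK by linarith
  qed
qed

lemma gN_le_G:
  assumes N: "real_of_int Kb + Mx / c \<le> real N"
  shows "f ((Inf (Tset N d))\<^sup>2) \<le> G"
proof (cases "f ((Inf (Tset N d))\<^sup>2) = 0")
  case True then show ?thesis using G_nn by simp
next
  case False
  then obtain a b where w: "d - (int N * a, int N * b) \<in> box" using lemA by blast
  show ?thesis using lemB[OF N w] g_le_G by simp
qed

end

lemma int_mult_ge2: "\<bar>k::int\<bar> \<ge> 2 \<Longrightarrow> 2 * int N \<le> \<bar>int N * k\<bar>"
proof -
  assume "\<bar>k\<bar> \<ge> 2"
  then have "int N * 2 \<le> int N * \<bar>k\<bar>" by (intro mult_left_mono) auto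
  then show ?thesis by (simp add: abs_mult mult.commute)
qed

lemma pair_zero_simps[simp]: "(x::int\<times>int) - (0,0) = x" "(x::int\<times>int) + (0,0) = x"
  by (cases x; simp)+

context geo begin

definition core :: "nat \<Rightarrow> (int \<times> int) set" where
  "core n = {- int n + 2*Kb ..< int n - 2*Kb} \<times> {- int n + 2*Kb ..< int n - 2*Kb}"
definition inter :: "nat \<Rightarrow> (int \<times> int) set" where
  "inter n = {- int n + Kb ..< int n - Kb} \<times> {- int n + Kb ..< int n - Kb}"
definition Tb :: "(int \<times> int) set" where "Tb = {-1..1} \<times> {-1..1}"
definition SN :: "nat \<Rightarrow> (int \<times> int) set" where
  "SN n = (\<lambda>(w,t). w + (int (2*n) * fst t, int (2*n) * snd t)) ` (box \<times> Tb)"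
definition psiN :: "nat \<Rightarrow> (int \<times> int \<Rightarrow> complex) \<Rightarrow> int \<times> int \<Rightarrow> complex" where
  "psiN n \<psi> u = (if u \<in> core n then 0 else \<psi> u)"

lemma SN_fin: "finite (SN n)" unfolding SN_def Tb_def using box_fin by simp
lemma SN_card: "card (SN n) \<le> card box * 9"
proof -
  have "card (SN n) \<le> card (box \<times> Tb)" unfolding SN_def by (rule card_image_le) (simp add: Tb_def box_fin)
  also have "\<dots> = card box * 9" by (simp add: card_cartesian_product Tb_def)
  finally show ?thesis .
qed
lemma box_SN: "box \<subseteq> SN n"
proof
  fix w assume "w \<in> box"
  moreover have "(0::int,0::int) \<in> Tb" by (simp add: Tb_def)
  ultimately have "(w,(0,0)) \<in> box \<times> Tb" by simp
  then show "w \<in> SN n" unfolding SN_def by (rule image_eqI[rotated]) simp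
qed
lemma zero_SN: "(0,0) \<in> SN n" using box_SN zero_box by blast

lemma tdist_T: "tdist B N (lat B u) (lat B v) = Inf (Tset N (u - v))"
  unfolding tdist_lat Tset_def ..

lemma h1: "v \<notin> inter n \<Longrightarrow> u - v \<in> box \<Longrightarrow> u \<notin> core n"
  unfolding inter_def core_def box_def by (cases u; cases v) auto

lemma interior_out:
  assumes "v \<in> inter n" "u \<notin> trunc (2*n)"
  shows "f ((norm (lat B u - lat B v))\<^sup>2) = 0"
proof (rule ccontr)
  assume "f ((norm (lat B u - lat B v))\<^sup>2) \<noteq> 0"
  then have "u - v \<in> box" unfolding lat_diff by (rule g_box)
  then show False using assms Kb_nn unfolding inter_def box_def trunc_even by (cases u; cases v) auto
qed

lemma interior_terms:
  assumes N: "real_of_int Kb + Mx / c \<le> real (2*n)"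
    and v: "v \<in> inter n" and u: "u \<in> trunc (2*n)"
  shows "f ((tdist B (2*n) (lat B u) (lat B v))\<^sup>2) = f ((norm (lat B u - lat B v))\<^sup>2)"
proof (cases "u - v \<in> box")
  case True
  then have "u - v - (int (2*n) * 0, int (2*n) * 0) \<in> box" by (cases "u - v") simp
  from lemB[OF N this] show ?thesis by (simp add: tdist_T lat_diff)
next
  case False
  then have g0: "f ((norm (lat B u - lat B v))\<^sup>2) = 0" using g_box unfolding lat_diff by blast
  have "f ((Inf (Tset (2*n) (u - v)))\<^sup>2) = 0"
  proof (rule ccontr)
    assume "f ((Inf (Tset (2*n) (u - v)))\<^sup>2) \<noteq> 0"
    then obtain a b where w: "u - v - (int (2*n) * a, int (2*n) * b) \<in> box" using lemA by blast
    have ca: "\<bar>int (2*n) * a\<bar> < int (2*n)" and cb: "\<bar>int (2*n) * b\<bar> < int (2*n)"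
      using w v u unfolding box_def inter_def trunc_even by (cases u; cases v; auto)+
    have "a = 0" using ca int_mult_ge[of a "2*n"] by (cases "a = 0") auto
    moreover have "b = 0" using cb int_mult_ge[of b "2*n"] by (cases "b = 0") auto
    ultimately show False using w False by simp
  qed
  then show ?thesis using g0 by (simp add: tdist_T)
qed

lemma h2:
  assumes N: "real_of_int Kb + Mx / c \<le> real (2*n)" and Kn: "Kb < int n"
    and v: "v \<in> trunc (2*n)" "v \<notin> inter n" and u: "u \<in> trunc (2*n)"
    and g: "f ((tdist B (2*n) (lat B u) (lat B v))\<^sup>2) \<noteq> 0"
  shows "u - v \<in> SN n \<and> u \<notin> core n"
proof -
  from g obtain a b where w: "u - v - (int (2*n) * a, int (2*n) * b) \<in> box"
    using lemA[of "2*n" "u - v"] unfolding tdist_T by blast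
  define w where "w = u - v - (int (2*n) * a, int (2*n) * b)"
  have wb: "\<bar>fst w\<bar> \<le> Kb" "\<bar>snd w\<bar> \<le> Kb" using w unfolding w_def box_def mem_Times_iff by auto
  have e1: "fst u - fst v = fst w + int (2*n) * a" and e2: "snd u - snd v = snd w + int (2*n) * b"
    unfolding w_def by auto
  have ub: "- int n \<le> fst u" "fst u < int n" "- int n \<le> snd u" "snd u < int n"
    using u unfolding trunc_even mem_Times_iff by auto
  have vb: "- int n \<le> fst v" "fst v < int n" "- int n \<le> snd v" "snd v < int n"
    using v unfolding trunc_even mem_Times_iff by auto
  have "\<bar>a\<bar> < 2"
  proof (rule ccontr)
    assume "\<not> \<bar>a\<bar> < 2" then have "2 * int (2*n) \<le> \<bar>int (2*n) * a\<bar>" by (intro int_mult_ge2) simp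
    then show False using e1 wb ub vb Kn by arith
  qed
  moreover have "\<bar>b\<bar> < 2"
  proof (rule ccontr)
    assume "\<not> \<bar>b\<bar> < 2" then have "2 * int (2*n) \<le> \<bar>int (2*n) * b\<bar>" by (intro int_mult_ge2) simp
    then show False using e2 wb ub vb Kn by arith
  qed
  ultimately have "(a,b) \<in> Tb" unfolding Tb_def by auto
  then have "(w,(a,b)) \<in> box \<times> Tb" using w unfolding w_def by simp
  moreover have "u - v = w + (int (2*n) * a, int (2*n) * b)" unfolding w_def by simp
  ultimately have s: "u - v \<in> SN n" unfolding SN_def by (force intro: image_eqI[where x="(w,(a,b))"])
  have "u \<notin> core n"
  proof (cases "a = 0 \<and> b = 0")
    case True then show ?thesis using h1[OF v(2)] w by simp
  next
    case False
    then show ?thesis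
    proof (cases "a = 0")
      case True
      then have "b \<noteq> 0" using False by simp
      then have "int (2*n) \<le> \<bar>int (2*n) * b\<bar>" by (rule int_mult_ge)
      then have "snd u \<ge> int n - Kb \<or> snd u < - int n + Kb" using e2 wb ub vb by arith
      then show ?thesis unfolding core_def mem_Times_iff using Kb_nn by auto
    next
      case False
      then have "int (2*n) \<le> \<bar>int (2*n) * a\<bar>" by (rule int_mult_ge)
      then have "fst u \<ge> int n - Kb \<or> fst u < - int n + Kb" using e1 wb ub vb by arith
      then show ?thesis unfolding core_def mem_Times_iff using Kb_nn by auto
    qed
  qed
  with s show ?thesis by blast
qed

end

context geo begin

lemma Wf_fin: "Wf f B \<psi> v = (\<Sum>u\<in>(\<lambda>w. v + w) ` box - {v}. of_real (f ((norm (lat B u - lat B v))\<^sup>2)) * \<psi> u)"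
proof -
  have "Wf f B \<psi> v = (\<Sum>\<^sub>\<infinity>u\<in>(\<lambda>w. v + w) ` box - {v}. of_real (f ((norm (lat B u - lat B v))\<^sup>2)) * \<psi> u)"
    unfolding Wf_def
  proof (rule infsum_cong_neutral)
    fix u assume u: "u \<in> (UNIV - {v}) - ((\<lambda>w. v + w) ` box - {v})"
    have "f ((norm (lat B u - lat B v))\<^sup>2) = 0"
    proof (rule ccontr)
      assume "f ((norm (lat B u - lat B v))\<^sup>2) \<noteq> 0"
      then have "u - v \<in> box" unfolding lat_diff by (rule g_box)
      then have "u \<in> (\<lambda>w. v + w) ` box" by (rule image_eqI[rotated]) simp
      then show False using u by blast
    qed
    then show "of_real (f ((norm (lat B u - lat B v))\<^sup>2)) * \<psi> u = 0" by simp
  qed auto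
  then show ?thesis using box_fin by simp
qed

lemma Wf_bound:
  assumes v: "v \<notin> inter n"
  shows "norm (Wf f B \<psi> v) \<le> G * (\<Sum>s\<in>SN n. norm (psiN n \<psi> (v + s)))"
proof -
  let ?V = "(\<lambda>w. v + w) ` box - {v}"
  have "norm (Wf f B \<psi> v) \<le> (\<Sum>u\<in>?V. norm (of_real (f ((norm (lat B u - lat B v))\<^sup>2)) * \<psi> u))"
    unfolding Wf_fin by (rule norm_sum)
  also have "\<dots> \<le> (\<Sum>u\<in>?V. G * norm (psiN n \<psi> u))"
  proof (rule sum_mono)
    fix u assume "u \<in> ?V"
    show "norm (of_real (f ((norm (lat B u - lat B v))\<^sup>2)) * \<psi> u) \<le> G * norm (psiN n \<psi> u)"
    proof (cases "f ((norm (lat B u - lat B v))\<^sup>2) = 0")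
      case True then show ?thesis using G_nn by simp
    next
      case False
      then have "u - v \<in> box" unfolding lat_diff by (rule g_box)
      then have "u \<notin> core n" by (rule h1[OF v])
      then have "psiN n \<psi> u = \<psi> u" by (simp add: psiN_def)
      moreover have "f ((norm (lat B u - lat B v))\<^sup>2) \<le> G" using g_le_G[of "u - v"] by (simp add: lat_diff)
      ultimately show ?thesis using fnn by (simp add: norm_mult mult_right_mono)
    qed
  qed
  also have "\<dots> \<le> (\<Sum>u\<in>(\<lambda>w. v + w) ` box. G * norm (psiN n \<psi> u))"
    by (rule sum_mono2) (use box_fin G_nn in auto)
  also have "\<dots> = (\<Sum>w\<in>box. G * norm (psiN n \<psi> (v + w)))"
    by (subst sum.reindex) (auto simp: inj_on_def)
  also have "\<dots> \<le> (\<Sum>s\<in>SN n. G * norm (psiN n \<psi> (v + s)))"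
    by (rule sum_mono2) (use SN_fin box_SN G_nn in auto)
  finally show ?thesis by (simp add: sum_distrib_left)
qed

lemma WfN_bound:
  assumes N: "real_of_int Kb + Mx / c \<le> real (2*n)" and Kn: "Kb < int n" and v: "v \<notin> inter n"
  shows "norm (WfN f B (2*n) \<psi> v) \<le> G * (\<Sum>s\<in>SN n. norm (psiN n \<psi> (v + s)))"
proof (cases "v \<in> trunc (2*n)")
  case False then show ?thesis using G_nn by (simp add: WfN_def sum_nonneg)
next
  case vt: True
  let ?T = "trunc (2*n) - {v}"
  have ft: "finite (trunc (2*n))" by (simp add: trunc_def)
  let ?gN = "\<lambda>u. f ((tdist B (2*n) (lat B u) (lat B v))\<^sup>2)"
  have "norm (WfN f B (2*n) \<psi> v) \<le> (\<Sum>u\<in>?T. norm (of_real (?gN u) * \<psi> u))"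
    unfolding WfN_def using vt by (simp add: norm_sum)
  also have "\<dots> \<le> (\<Sum>u\<in>?T. if u - v \<in> SN n then G * norm (psiN n \<psi> u) else 0)"
  proof (rule sum_mono)
    fix u assume u: "u \<in> ?T"
    show "norm (of_real (?gN u) * \<psi> u) \<le> (if u - v \<in> SN n then G * norm (psiN n \<psi> u) else 0)"
    proof (cases "?gN u = 0")
      case True then show ?thesis using G_nn by simp
    next
      case False
      from h2[OF N Kn vt v _ False] u have hh: "u - v \<in> SN n" "u \<notin> core n" by auto
      then have "psiN n \<psi> u = \<psi> u" by (simp add: psiN_def)
      moreover have "?gN u \<le> G" using gN_le_G[OF N] by (simp add: tdist_T)
      ultimately show ?thesis using fnn hh by (simp add: norm_mult mult_right_mono)
    qed
  qed
  also have "\<dots> = (\<Sum>u\<in>{u \<in> ?T. u - v \<in> SN n}. G * norm (psiN n \<psi> u))"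
    by (rule sum.inter_filter[symmetric]) (use ft in simp)
  also have "\<dots> \<le> (\<Sum>u\<in>(\<lambda>s. v + s) ` SN n. G * norm (psiN n \<psi> u))"
  proof (rule sum_mono2)
    show "finite ((\<lambda>s. v + s) ` SN n)" using SN_fin by simp
    show "{u \<in> ?T. u - v \<in> SN n} \<subseteq> (\<lambda>s. v + s) ` SN n"
    proof
      fix u assume "u \<in> {u \<in> ?T. u - v \<in> SN n}"
      then have "u - v \<in> SN n" by simp
      then show "u \<in> (\<lambda>s. v + s) ` SN n" by (rule image_eqI[rotated]) simp
    qed
  qed (use G_nn in simp)
  also have "\<dots> = (\<Sum>s\<in>SN n. G * norm (psiN n \<psi> (v + s)))"
    by (subst sum.reindex) (auto simp: inj_on_def)
  finally show ?thesis by (simp add: sum_distrib_left)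
qed

lemma D_bound:
  assumes N: "real_of_int Kb + Mx / c \<le> real (2*n)" and Kn: "Kb < int n"
  shows "norm (WfN f B (2*n) \<psi> v - Wf f B \<psi> v) \<le> (2 * G) * (\<Sum>s\<in>SN n. norm (psiN n \<psi> (v + s)))"
proof (cases "v \<in> inter n")
  case True
  have vt: "v \<in> trunc (2*n)" using True Kb_nn unfolding inter_def trunc_even by auto
  have "Wf f B \<psi> v = (\<Sum>\<^sub>\<infinity>u\<in>trunc (2*n) - {v}. of_real (f ((norm (lat B u - lat B v))\<^sup>2)) * \<psi> u)"
    unfolding Wf_def by (rule infsum_cong_neutral) (use interior_out[OF True] in auto)
  also have "\<dots> = (\<Sum>u\<in>trunc (2*n) - {v}. of_real (f ((norm (lat B u - lat B v))\<^sup>2)) * \<psi> u)"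
    by (simp add: trunc_def)
  also have "\<dots> = WfN f B (2*n) \<psi> v"
    unfolding WfN_def using vt interior_terms[OF N True] by (auto intro!: sum.cong)
  finally have "WfN f B (2*n) \<psi> v - Wf f B \<psi> v = 0" by simp
  then show ?thesis using G_nn by (simp add: sum_nonneg)
next
  case False
  have "norm (WfN f B (2*n) \<psi> v - Wf f B \<psi> v) \<le> norm (WfN f B (2*n) \<psi> v) + norm (Wf f B \<psi> v)"
    by (rule norm_triangle_ineq4)
  also have "\<dots> \<le> G * (\<Sum>s\<in>SN n. norm (psiN n \<psi> (v + s))) + G * (\<Sum>s\<in>SN n. norm (psiN n \<psi> (v + s)))"
    by (intro add_mono WfN_bound[OF N Kn False] Wf_bound[OF False])
  finally show ?thesis by simp
qed

lemma cN_eq: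
  assumes N: "real_of_int Kb + Mx / c \<le> real (2*n)" and Kn: "Kb < int n"
  shows "(\<Sum>u\<in>trunc (2*n) - {(0,0)}. f ((tdist B (2*n) (lat B u) (lat B (0,0)))\<^sup>2))
       = (\<Sum>\<^sub>\<infinity>u\<in>UNIV - {(0,0)}. f ((norm (lat B u))\<^sup>2))"
proof -
  have z: "(0,0) \<in> inter n" using Kn Kb_nn unfolding inter_def by auto
  have "vector [0,0] = (0::real^2)" by (simp add: vec_eq_iff forall_2 vector_2)
  then have l0: "lat B (0,0) = 0" by (simp add: lat_def)
  have "(\<Sum>\<^sub>\<infinity>u\<in>UNIV - {(0,0)}. f ((norm (lat B u))\<^sup>2)) = (\<Sum>\<^sub>\<infinity>u\<in>trunc (2*n) - {(0,0)}. f ((norm (lat B u - lat B (0,0)))\<^sup>2))"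
    by (rule infsum_cong_neutral) (use interior_out[OF z] l0 in auto)
  also have "\<dots> = (\<Sum>u\<in>trunc (2*n) - {(0,0)}. f ((norm (lat B u - lat B (0,0)))\<^sup>2))"
    by (simp add: trunc_def)
  also have "\<dots> = (\<Sum>u\<in>trunc (2*n) - {(0,0)}. f ((tdist B (2*n) (lat B u) (lat B (0,0)))\<^sup>2))"
    using interior_terms[OF N z] by (auto intro!: sum.cong)
  finally show ?thesis by simp
qed

lemma E_bound:
  assumes N: "real_of_int Kb + Mx / c \<le> real (2*n)" and Kn: "Kb < int n"
  shows "norm (LfN f B (2*n) \<psi> v - Lf f B \<psi> v)
     \<le> (2 * G + \<bar>\<Sum>\<^sub>\<infinity>u\<in>UNIV - {(0,0)}. f ((norm (lat B u))\<^sup>2)\<bar>) * (\<Sum>s\<in>SN n. norm (psiN n \<psi> (v + s)))"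
proof -
  let ?c = "\<Sum>\<^sub>\<infinity>u\<in>UNIV - {(0,0)}. f ((norm (lat B u))\<^sup>2)"
  let ?S = "\<Sum>s\<in>SN n. norm (psiN n \<psi> (v + s))"
  have D: "norm (WfN f B (2*n) \<psi> v - Wf f B \<psi> v) \<le> 2 * G * ?S" by (rule D_bound[OF N Kn])
  have Sn: "?S \<ge> 0" by (simp add: sum_nonneg)
  show ?thesis
  proof (cases "v \<in> trunc (2*n)")
    case True
    have "LfN f B (2*n) \<psi> v - Lf f B \<psi> v = - (WfN f B (2*n) \<psi> v - Wf f B \<psi> v)"
      unfolding LfN_def Lf_def using True cN_eq[OF N Kn] by simp
    then have "norm (LfN f B (2*n) \<psi> v - Lf f B \<psi> v) = norm (WfN f B (2*n) \<psi> v - Wf f B \<psi> v)" by (simp add: norm_minus_commute)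
    also have "\<dots> \<le> 2 * G * ?S" by (rule D)
    also have "\<dots> \<le> (2 * G + \<bar>?c\<bar>) * ?S" by (rule mult_right_mono) (use Sn in auto)
    finally show ?thesis .
  next
    case False
    have vc: "v \<notin> core n" using False Kb_nn unfolding core_def trunc_even by auto
    have p: "norm (\<psi> v) \<le> ?S"
    proof -
      have "norm (\<psi> v) = norm (psiN n \<psi> (v + (0,0)))" using vc by (simp add: psiN_def)
      also have "\<dots> \<le> ?S" by (rule member_le_sum) (use zero_SN SN_fin in auto)
      finally show ?thesis .
    qed
    have w0: "WfN f B (2*n) \<psi> v = 0" using False by (simp add: WfN_def)
    have "LfN f B (2*n) \<psi> v - Lf f B \<psi> v = - (of_real ?c * \<psi> v) - (WfN f B (2*n) \<psi> v - Wf f B \<psi> v)"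
      unfolding LfN_def Lf_def using False w0 by simp
    then have "norm (LfN f B (2*n) \<psi> v - Lf f B \<psi> v) = norm (of_real ?c * \<psi> v + (WfN f B (2*n) \<psi> v - Wf f B \<psi> v))"
      by (simp only: minus_add_distrib[symmetric] diff_conv_add_uminus norm_minus_cancel)
    also have "\<dots> \<le> norm (of_real ?c * \<psi> v) + norm (WfN f B (2*n) \<psi> v - Wf f B \<psi> v)"
      by (rule norm_triangle_ineq)
    also have "\<dots> \<le> \<bar>?c\<bar> * norm (\<psi> v) + 2 * G * ?S"
      using D by (simp add: norm_mult)
    also have "\<dots> \<le> \<bar>?c\<bar> * ?S + 2 * G * ?S" using p by (simp add: mult_left_mono)
    finally show ?thesis by (simp add: distrib_right)
  qed
qed

end

context geo begin

lemma conv_lemma: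
  fixes T :: "nat \<Rightarrow> (int \<times> int \<Rightarrow> complex) \<Rightarrow> int \<times> int \<Rightarrow> complex"
    and S :: "(int \<times> int \<Rightarrow> complex) \<Rightarrow> int \<times> int \<Rightarrow> complex"
  assumes K: "K \<ge> 0"
    and bd: "\<And>n \<psi> v. real_of_int Kb + Mx / c \<le> real (2*n) \<Longrightarrow> Kb < int n \<Longrightarrow>
       norm (T (2*n) \<psi> v - S \<psi> v) \<le> K * (\<Sum>s\<in>SN n. norm (psiN n \<psi> (v + s)))"
  shows "strong_conv_even T S"
  unfolding strong_conv_even_def
proof (intro allI impI conjI)
  fix \<psi> assume l2: "in_l2 \<psi>"
  obtain n0 :: nat where n0: "real_of_int Kb + Mx / c + \<bar>real_of_int Kb\<bar> + 1 \<le> real n0"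
    using real_arch_simple by blast
  have "norm (lat B (0,0)) \<le> Mx" unfolding Mx_def by (intro Max_ge) (use box_fin zero_box in auto)
  then have Mx0: "Mx \<ge> 0" using norm_ge_zero order_trans by blast
  have ev: "\<forall>\<^sub>F n in sequentially. real_of_int Kb + Mx / c \<le> real (2*n) \<and> Kb < int n"
    unfolding eventually_sequentially
  proof (intro exI[of _ n0] allI impI)
    fix n assume "n0 \<le> n"
    then have "real n0 \<le> real n" by simp
    moreover have "Mx / c \<ge> 0" using Mx0 cpos by simp
    ultimately show "real_of_int Kb + Mx / c \<le> real (2*n) \<and> Kb < int n" using n0 by linarith
  qed
  let ?C = "real (card box * 9)"
  let ?t = "\<lambda>n. \<Sum>\<^sub>\<infinity>v. (norm (psiN n \<psi> v))\<^sup>2"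
  have main: "in_l2 (\<lambda>v. T (2*n) \<psi> v - S \<psi> v) \<and>
      (\<Sum>\<^sub>\<infinity>v. (norm (T (2*n) \<psi> v - S \<psi> v))\<^sup>2) \<le> K\<^sup>2 * ?C * ?C * ?t n"
    if c1: "real_of_int Kb + Mx / c \<le> real (2*n)" and c2: "Kb < int n" for n
  proof -
    have l2n: "in_l2 (psiN n \<psi>)"
    proof -
      have "(\<lambda>v. (norm (\<psi> v))\<^sup>2) summable_on UNIV" using l2 by (simp add: in_l2_def)
      then have "(\<lambda>v. (norm (psiN n \<psi> v))\<^sup>2) summable_on UNIV"
        by (rule summable_on_comparison_test) (auto simp: psiN_def)
      then show ?thesis by (simp add: in_l2_def)
    qed
    have r: "in_l2 (\<lambda>v. T (2*n) \<psi> v - S \<psi> v) \<and>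
      (\<Sum>\<^sub>\<infinity>v. (norm (T (2*n) \<psi> v - S \<psi> v))\<^sup>2) \<le> K\<^sup>2 * real (card (SN n)) * real (card (SN n)) * ?t n"
      by (rule l2_bound[OF l2n SN_fin K]) (rule bd[OF c1 c2])
    have tn: "?t n \<ge> 0" by (rule infsum_nonneg) simp
    have cc: "real (card (SN n)) \<le> ?C" using SN_card by (simp only: of_nat_le_iff)
    have "K\<^sup>2 * real (card (SN n)) * real (card (SN n)) * ?t n \<le> K\<^sup>2 * ?C * ?C * ?t n"
      by (intro mult_right_mono mult_mono cc) (use tn in auto)
    then show ?thesis using r by linarith
  qed
  show "\<forall>\<^sub>F n in sequentially. in_l2 (\<lambda>v. T (2*n) \<psi> v - S \<psi> v)"
    using ev by eventually_elim (use main in blast)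
  have tl: "?t \<longlonglongrightarrow> 0"
  proof -
    have eq: "psiN n \<psi> = (\<lambda>v. if v \<in> {- int n + 2*Kb ..< int n - 2*Kb} \<times> {- int n + 2*Kb ..< int n - 2*Kb} then 0 else \<psi> v)" for n
      by (simp add: psiN_def core_def fun_eq_iff)
    show ?thesis unfolding eq by (rule tail_l2[OF l2]) (simp, rule box_lim)
  qed
  then have "(\<lambda>n. K\<^sup>2 * ?C * ?C * ?t n) \<longlonglongrightarrow> K\<^sup>2 * ?C * ?C * 0" by (intro tendsto_intros)
  then have tl2: "(\<lambda>n. K\<^sup>2 * ?C * ?C * ?t n) \<longlonglongrightarrow> 0" by simp
  show "(\<lambda>n. \<Sum>\<^sub>\<infinity>v. (norm (T (2*n) \<psi> v - S \<psi> v))\<^sup>2) \<longlonglongrightarrow> 0"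
  proof (rule tendsto_sandwich[OF _ _ tendsto_const tl2])
    show "\<forall>\<^sub>F n in sequentially. 0 \<le> (\<Sum>\<^sub>\<infinity>v. (norm (T (2*n) \<psi> v - S \<psi> v))\<^sup>2)"
      by (intro always_eventually allI infsum_nonneg) simp
    show "\<forall>\<^sub>F n in sequentially. (\<Sum>\<^sub>\<infinity>v. (norm (T (2*n) \<psi> v - S \<psi> v))\<^sup>2) \<le> K\<^sup>2 * ?C * ?C * ?t n"
      using ev by eventually_elim (use main in blast)
  qed
qed

end

theorem proposition4p4:
  fixes B :: "real^2^2" and f :: "real \<Rightarrow> real"
  assumes "invertible B"
    and "\<And>x. f x \<ge> 0"
    and "compact (closure {x. f x \<noteq> 0})"
    and "f 0 = 0"
    and "(\<lambda>u. f ((norm (lat B u))\<^sup>2)) summable_on (UNIV - {(0,0)})"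
  shows "strong_conv_even (\<lambda>N. WfN f B N) (Wf f B) \<and> strong_conv_even (\<lambda>N. LfN f B N) (Lf f B)"
proof -
  obtain c where c: "c > 0" "\<And>k. c * \<bar>real_of_int (fst k)\<bar> \<le> norm (lat B k) \<and> c * \<bar>real_of_int (snd k)\<bar> \<le> norm (lat B k)"
    using lat_lower[OF assms(1)] by auto
  obtain a where a: "\<And>x. x \<in> closure {x. f x \<noteq> 0} \<Longrightarrow> norm x \<le> a"
    using compact_imp_bounded[OF assms(3)] unfolding bounded_iff by auto
  define M where "M = max a 0"
  have fs: "x \<le> M" if "f x \<noteq> 0" for x
  proof -
    have "x \<in> closure {x. f x \<noteq> 0}" using that closure_subset[of "{x. f x \<noteq> 0}"] by blast
    then have "norm x \<le> a" by (rule a)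
    then show ?thesis unfolding M_def by simp
  qed
  define Kb where "Kb = \<lceil>(sqrt M + 1) / c\<rceil>"
  interpret geo B f c M Kb
  proof
    show "0 < c" by (rule c(1))
    show "\<And>k. c * \<bar>real_of_int (fst k)\<bar> \<le> norm (lat B k) \<and> c * \<bar>real_of_int (snd k)\<bar> \<le> norm (lat B k)" by (rule c(2))
    show "0 \<le> M" unfolding M_def by simp
    show "\<And>x. f x \<noteq> 0 \<Longrightarrow> x \<le> M" by (rule fs)
    show "\<And>x. 0 \<le> f x" by (rule assms(2))
    show "(sqrt M + 1) / c \<le> real_of_int Kb" unfolding Kb_def by (rule le_of_int_ceiling)
  qed
  show ?thesis
  proof
    show "strong_conv_even (\<lambda>N. WfN f B N) (Wf f B)"
    proof (rule conv_lemma)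
      show "0 \<le> 2 * G" using G_nn by simp
      fix n \<psi> v assume "real_of_int Kb + Mx / c \<le> real (2*n)" "Kb < int n"
      then show "norm (WfN f B (2*n) \<psi> v - Wf f B \<psi> v) \<le> 2 * G * (\<Sum>s\<in>SN n. norm (psiN n \<psi> (v + s)))"
        by (rule D_bound)
    qed
    show "strong_conv_even (\<lambda>N. LfN f B N) (Lf f B)"
    proof (rule conv_lemma)
      show "0 \<le> 2 * G + \<bar>\<Sum>\<^sub>\<infinity>u\<in>UNIV - {(0,0)}. f ((norm (lat B u))\<^sup>2)\<bar>" using G_nn by simp
      fix n \<psi> v assume "real_of_int Kb + Mx / c \<le> real (2*n)" "Kb < int n"
      then show "norm (LfN f B (2*n) \<psi> v - Lf f B \<psi> v) \<le> (2 * G + \<bar>\<Sum>\<^sub>\<infinity>u\<in>UNIV - {(0,0)}. f ((norm (lat B u))\<^sup>2)\<bar>) * (\<Sum>s\<in>SN n. norm (psiN n \<psi> (v + s)))"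
        by (rule E_bound)
    qed
  qed
qed

end
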